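(* Let $\delta>0$, $\alpha\in(0,2)$, $\alpha_0\in(0,1)$, and suppose $$\limsup_{|x|\to\infty}\bigg[\Big(\sup_{|z|\ge|x|}e^{-V(z)}\Big)e^{\delta|x|}|x|^{d+\alpha-\alpha_0}\bigg]=0.$$ Then there is $C_0>0$ such that for all $f\in C_b^\infty(\mathbb R^d)$, $$\int\big(f(x)-\mu_{2V}(f)\big)^2\frac{e^{V(x)-\delta|x|}}{(1+|x|)^{d+\alpha}}\mu_{2V}(dx)\le C_0\iint\frac{(f(y)-f(x))^2}{|y-x|^{d+\alpha}}e^{-\delta|y-x|}e^{-V(y)}dy\,e^{-V(x)}dx.$$
   Context: Let $d\ge1$. $V:\mathbb R^d\to\mathbb R$ is a locally bounded measurable function such that $e^{-V}$ is bounded and $\int e^{-V(x)}dx<\infty$. $\mu_{2V}(dx):=\frac{e^{-2V(x)}}{\int e^{-2V(y)}dy}dx$, $\mu_{2V}(f)=\int f\,d\mu_{2V}$. $C_b^\infty$ denotes smooth functions bounded with all derivatives. *)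

theory Defs
  imports "HOL-Analysis.Analysis"
begin

text \<open>C_b^infinity: smooth functions bounded together with all their derivatives.\<close>
coinductive Cb_inf :: "('a::euclidean_space \<Rightarrow> real) \<Rightarrow> bool" where
  "\<lbrakk> bounded (range f);
     \<forall>x. f differentiable (at x);
     \<forall>i\<in>Basis. Cb_inf (\<lambda>x. frechet_derivative f (at x) i) \<rbrakk> \<Longrightarrow> Cb_inf f"

definition locally_bounded :: "('a::euclidean_space \<Rightarrow> real) \<Rightarrow> bool" where
  "locally_bounded V \<longleftrightarrow> (\<forall>K. compact K \<longrightarrow> bounded (V ` K))"

definition rho2V :: "('a::euclidean_space \<Rightarrow> real) \<Rightarrow> 'a \<Rightarrow> real" where
  "rho2V V x = exp (- 2 * V x) / (\<integral>y. exp (- 2 * V y) \<partial>lborel)"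

definition mu2V :: "('a::euclidean_space \<Rightarrow> real) \<Rightarrow> ('a \<Rightarrow> real) \<Rightarrow> real" where
  "mu2V V f = (\<integral>x. f x * rho2V V x \<partial>lborel)"

end

theory Submission
  imports Defs
begin

lemma tail_bound:
  fixes V :: "'a::euclidean_space \<Rightarrow> real" and \<delta> p a0 M :: real
  assumes M: "\<And>x. exp (- V x) \<le> M"
    and \<delta>: "\<delta> > 0" and a0: "0 < a0" "a0 < 1" and p: "p > 1"
    and tail: "Limsup at_infinity (\<lambda>x::'a. ereal ((SUP z\<in>{z. norm z \<ge> norm x}. exp (- V z))
                  * exp (\<delta> * norm x) * norm x powr (p - a0))) = 0"
  shows "\<exists>Bd. \<forall>y. exp (- V y) * exp (- V y) * (1 + norm y) powr p * exp (\<delta> * norm y) \<le> Bd"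
proof -
  have "eventually (\<lambda>x::'a. ereal ((SUP z\<in>{z. norm z \<ge> norm x}. exp (- V z))
                  * exp (\<delta> * norm x) * norm x powr (p - a0)) < 1) at_infinity"
    by (rule Limsup_lessD) (simp add: tail)
  then obtain R where R: "\<And>x::'a. R \<le> norm x \<Longrightarrow> (SUP z\<in>{z. norm z \<ge> norm x}. exp (- V z))
                  * exp (\<delta> * norm x) * norm x powr (p - a0) < 1"
    unfolding eventually_at_infinity by auto
  define R1 where "R1 = max R 1"
  define q where "q = p - a0"
  have key: "exp (- V y) * exp (- V y) * (1 + norm y) powr p * exp (\<delta> * norm y) \<le> 2 powr p / \<delta>"
    if y: "R1 \<le> norm y" for y
  proof -
    define r where "r = norm y"
    define s where "s = exp (- V y)"
    define t where "t = exp (\<delta> * r)"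
    have r1: "r \<ge> 1" using y by (simp add: R1_def r_def)
    have s0: "s > 0" and t0: "t > 0" by (auto simp: s_def t_def)
    have bdd: "bdd_above ((\<lambda>z. exp (- V z)) ` {z. norm z \<ge> norm y})"
      using M by (auto intro!: bdd_aboveI)
    have "s \<le> (SUP z\<in>{z. norm z \<ge> norm y}. exp (- V z))"
      unfolding s_def by (rule cSUP_upper[OF _ bdd]) auto
    hence "s * t * r powr q \<le> (SUP z\<in>{z. norm z \<ge> norm y}. exp (- V z)) * t * r powr q"
      using t0 by (intro mult_right_mono) auto
    also have "\<dots> < 1" using R[of y] y by (simp add: R1_def r_def t_def q_def)
    finally have h: "s * t * r powr q \<le> 1" by simp
    have rq: "r powr q > 0" using r1 by simp
    have hs: "s \<le> 1 / (t * r powr q)" using h t0 rq by (simp add: field_simps)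
    have "(1 + r) powr p \<le> (2 * r) powr p" using r1 p by (intro powr_mono2) auto
    also have "\<dots> = 2 powr p * (r powr q * r powr a0)"
      using r1 by (simp add: powr_mult q_def flip: powr_add)
    finally have h1: "(1 + r) powr p \<le> 2 powr p * (r powr q * r powr a0)" .
    have "s * s * (1 + r) powr p * t \<le> s * s * (2 powr p * (r powr q * r powr a0)) * t"
      using h1 s0 t0 by (intro mult_right_mono mult_left_mono) auto
    also have "\<dots> = 2 powr p * (s * t * r powr q) * (s * r powr a0)" by (simp add: algebra_simps)
    also have "\<dots> \<le> 2 powr p * 1 * (s * r powr a0)"
      using h s0 by (intro mult_right_mono mult_left_mono) auto
    also have "\<dots> \<le> 2 powr p * (1 / (t * r powr q) * r powr a0)"
      unfolding mult_1_right using hs by (intro mult_left_mono mult_right_mono) auto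
    also have "1 / (t * r powr q) * r powr a0 = r powr (a0 - q) / t"
      using r1 t0 by (simp add: powr_diff field_simps)
    also have "r powr (a0 - q) \<le> r powr 1" using r1 a0 p by (intro powr_mono) (auto simp: q_def)
    hence "r powr (a0 - q) / t \<le> r / t" using r1 t0 by (simp add: divide_right_mono)
    also have "r / t \<le> 1 / \<delta>"
    proof -
      have "1 + \<delta> * r \<le> t" unfolding t_def by (rule exp_ge_add_one_self)
      thus ?thesis using \<delta> t0 by (simp add: field_simps)
    qed
    finally show ?thesis by (simp add: r_def s_def t_def mult_left_mono)
  qed
  have small: "exp (- V y) * exp (- V y) * (1 + norm y) powr p * exp (\<delta> * norm y)
      \<le> M * M * (1 + R1) powr p * exp (\<delta> * R1)" if y: "norm y \<le> R1" for y
  proof -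
    have e: "0 \<le> exp (- V y)" "exp (- V y) \<le> M" "0 \<le> M" using M[of y] by (auto intro: order_trans[OF _ M[of y]])
    have "exp (- V y) * exp (- V y) \<le> M * M" using e by (intro mult_mono) auto
    moreover have "(1 + norm y) powr p \<le> (1 + R1) powr p" using y p by (intro powr_mono2) auto
    moreover have "exp (\<delta> * norm y) \<le> exp (\<delta> * R1)" using y \<delta> by simp
    ultimately show ?thesis using e
      by (intro mult_mono) (auto intro!: mult_nonneg_nonneg)
  qed
  show ?thesis
    apply (rule exI[of _ "max (2 powr p / \<delta>) (M * M * (1 + R1) powr p * exp (\<delta> * R1))"])
    using key small by (meson linear max.coboundedI1 max.coboundedI2)
qed

lemma alg: fixes c u v g n Z :: real
  assumes "u * v = 1" "n > 0" "Z > 0"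
  shows "(c / n * u * g) * (g ^ 3 * n * v / Z^2) = c * (g^2 / Z)^2"
proof -
  have "(c / n * u * g) * (g ^ 3 * n * v / Z^2) = c * g^4 / Z^2 * (u * v) * (n / n)"
    by (simp add: field_simps power2_eq_square power3_eq_cube) (simp add: power_def mult_ac)
  also have "\<dots> = c * (g^2 / Z)^2" using assms by (simp add: power_divide flip: power_mult)
  finally show ?thesis .
qed

lemma main_bound:
  fixes V :: "'a::euclidean_space \<Rightarrow> real" and \<delta> p Bd M :: real and f :: "'a \<Rightarrow> real"
  assumes V_meas[measurable]: "V \<in> borel_measurable borel"
    and M: "\<And>x. exp (- V x) \<le> M"
    and V_int: "integrable lborel (\<lambda>x. exp (- V x))"
    and \<delta>: "\<delta> > 0" and p: "p > 0"
    and Bd: "\<And>y. exp (- V y) * exp (- V y) * (1 + norm y) powr p * exp (\<delta> * norm y) \<le> Bd"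
    and f_meas[measurable]: "f \<in> borel_measurable borel"
    and F: "\<And>x. \<bar>f x\<bar> \<le> F"
  defines "Z \<equiv> (\<integral>y. exp (- 2 * V y) \<partial>lborel)"
  shows "(\<integral>\<^sup>+ x. ennreal ((f x - (\<integral>y. f y * (exp (- 2 * V y) / Z) \<partial>lborel))\<^sup>2 * exp (V x - \<delta> * norm x)
              / (1 + norm x) powr p * (exp (- 2 * V x) / Z)) \<partial>lborel)
    \<le> ennreal ((Bd / Z^3) * (\<integral>x. exp (- V x) \<partial>lborel)) * (\<integral>\<^sup>+ x. (\<integral>\<^sup>+ y. ennreal ((f y - f x)\<^sup>2 / norm (y - x) powr p
              * exp (- \<delta> * norm (y - x)) * exp (- V y)) \<partial>lborel) * ennreal (exp (- V x)) \<partial>lborel)"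
proof -
  define e where "e y = exp (- V y)" for y
  have e_meas[measurable]: "e \<in> borel_measurable borel" unfolding e_def by measurable
  have e2: "exp (- 2 * V y) = e y ^ 2" for y
    unfolding e_def by (simp add: power2_eq_square flip: exp_add)
  have e_pos: "e y > 0" for y unfolding e_def by simp
  have eM: "e y \<le> M" for y unfolding e_def by (rule M)
  have M0: "M \<ge> 0" using eM[of 0] e_pos[of 0] by simp
  have e_int: "integrable lborel e" unfolding e_def by (rule V_int)
  have e2_int: "integrable lborel (\<lambda>y. e y ^ 2)"
  proof (rule Bochner_Integration.integrable_bound[OF integrable_mult_right[OF e_int, of M]])
    show "(\<lambda>y. e y ^ 2) \<in> borel_measurable lborel" by measurable
    show "AE x in lborel. norm (e x ^ 2) \<le> norm (M * e x)"
    proof (rule AE_I2)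
      fix x
      have "e x * e x \<le> M * e x" using eM[of x] e_pos[of x] by (intro mult_right_mono) auto
      thus "norm (e x ^ 2) \<le> norm (M * e x)" using e_pos[of x] M0 by (simp add: power2_eq_square)
    qed
  qed
  have Z_eq: "Z = (\<integral>y. e y ^ 2 \<partial>lborel)" unfolding Z_def e2 ..
  have Z_pos: "Z > 0"
  proof -
    have "Z \<ge> 0" unfolding Z_eq by (rule integral_nonneg_AE) auto
    moreover have "Z \<noteq> 0"
    proof
      assume "Z = 0"
      hence "AE x in lborel. e x ^ 2 = 0"
        unfolding Z_eq by (subst (asm) integral_nonneg_eq_0_iff_AE[OF e2_int]) auto
      hence "AE x in (lborel :: 'a measure). False"
        by (rule eventually_mono) (metis e_pos less_irrefl power_eq_0_iff)
      hence "ae_filter (lborel :: 'a measure) = bot" using trivial_limit_def by blast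
      thus False by (simp add: ae_filter_eq_bot_iff)
    qed
    ultimately show ?thesis by simp
  qed
  define \<rho> where "\<rho> y = e y ^ 2 / Z" for y
  have \<rho>_meas[measurable]: "\<rho> \<in> borel_measurable borel" unfolding \<rho>_def by measurable
  have \<rho>_int: "integrable lborel \<rho>" unfolding \<rho>_def using e2_int by auto
  have \<rho>_1: "(\<integral>y. \<rho> y \<partial>lborel) = 1" unfolding \<rho>_def using Z_pos by (simp add: Z_eq)
  have f\<rho>_int: "integrable lborel (\<lambda>y. f y * \<rho> y)"
  proof (rule Bochner_Integration.integrable_bound[OF integrable_mult_right[OF \<rho>_int, of F]])
    show "(\<lambda>y. f y * \<rho> y) \<in> borel_measurable lborel" by measurable
    show "AE x in lborel. norm (f x * \<rho> x) \<le> norm (F * \<rho> x)"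
    proof (rule AE_I2)
      fix x
      have "\<bar>f x\<bar> * \<rho> x \<le> \<bar>F\<bar> * \<rho> x"
        using F[of x] Z_pos by (intro mult_right_mono) (auto simp: \<rho>_def)
      thus "norm (f x * \<rho> x) \<le> norm (F * \<rho> x)" using Z_pos by (simp add: \<rho>_def abs_mult)
    qed
  qed
  define mu where "mu = (\<integral>y. f y * \<rho> y \<partial>lborel)"
  have mu_eq: "(\<integral>y. f y * (exp (- 2 * V y) / Z) \<partial>lborel) = mu"
    unfolding mu_def \<rho>_def e2 ..
  define A where "A x y = (f y - f x)\<^sup>2 / norm (y - x) powr p * exp (- \<delta> * norm (y - x)) * exp (- V y)" for x y
  define B where "B x y = e y ^ 3 * norm (y - x) powr p * exp (\<delta> * norm (y - x)) / Z^2" for x y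
  define E where "E x = (\<integral>\<^sup>+ y. ennreal (A x y) \<partial>lborel)" for x
  have A_nn: "A x y \<ge> 0" for x y unfolding A_def by simp
  have B_nn: "B x y \<ge> 0" for x y unfolding B_def using e_pos by (simp add: less_imp_le)
  have A_meas[measurable]: "(\<lambda>(x, y). A x y) \<in> borel_measurable (lborel \<Otimes>\<^sub>M lborel)"
    unfolding A_def by measurable
  have pointwise: "ennreal ((f x - mu)\<^sup>2) \<le> E x * (\<integral>\<^sup>+ y. ennreal (B x y) \<partial>lborel)" for x
  proof -
    have "f x - mu = (\<integral>y. (f x - f y) * \<rho> y \<partial>lborel)"
      using \<rho>_int f\<rho>_int \<rho>_1 unfolding mu_def by (simp add: left_diff_distrib)
    hence "norm (f x - mu) \<le> (\<integral>\<^sup>+ y. norm ((f x - f y) * \<rho> y) \<partial>lborel)"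
      using \<rho>_int f\<rho>_int by (simp only:) (rule integral_norm_bound_ennreal, auto simp: left_diff_distrib)
    also have "\<dots> = (\<integral>\<^sup>+ y. ennreal (sqrt (A x y)) * ennreal (sqrt (B x y)) \<partial>lborel)"
    proof (rule nn_integral_cong)
      fix y
      show "ennreal (norm ((f x - f y) * \<rho> y)) = ennreal (sqrt (A x y)) * ennreal (sqrt (B x y))"
      proof (cases "y = x")
        case True thus ?thesis by (simp add: A_def)
      next
        case False
        hence n: "norm (y - x) powr p > 0" by simp
        have "A x y * B x y = (f y - f x)^2 * (e y ^ 2 / Z)^2"
          unfolding A_def B_def e_def
          by (rule alg) (use n Z_pos in \<open>auto simp flip: exp_add\<close>)
        also have "\<dots> = ((f x - f y) * \<rho> y)^2"
          by (simp add: \<rho>_def power_mult_distrib power2_commute power_divide)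
        finally have "A x y * B x y = ((f x - f y) * \<rho> y)^2" .
        hence "sqrt (A x y) * sqrt (B x y) = norm ((f x - f y) * \<rho> y)"
          by (simp flip: real_sqrt_mult)
        thus ?thesis using A_nn B_nn by (simp flip: ennreal_mult)
      qed
    qed
    finally have h: "ennreal (norm (f x - mu)) \<le> (\<integral>\<^sup>+ y. ennreal (sqrt (A x y)) * ennreal (sqrt (B x y)) \<partial>lborel)" .
    have "ennreal ((f x - mu)\<^sup>2) = (ennreal (norm (f x - mu)))^2"
      by (simp add: ennreal_power)
    also have "\<dots> \<le> (\<integral>\<^sup>+ y. ennreal (sqrt (A x y)) * ennreal (sqrt (B x y)) \<partial>lborel)^2"
      using h by (intro power_mono) auto
    also have "\<dots> \<le> (\<integral>\<^sup>+ y. ennreal (sqrt (A x y)) ^ 2 \<partial>lborel) * (\<integral>\<^sup>+ y. ennreal (sqrt (B x y)) ^ 2 \<partial>lborel)"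
      by (rule Cauchy_Schwarz_nn_integral) (auto simp: A_def B_def)
    also have "\<dots> = E x * (\<integral>\<^sup>+ y. ennreal (B x y) \<partial>lborel)"
      unfolding E_def using A_nn B_nn by (simp add: ennreal_power)
    finally show ?thesis .
  qed
  define I where "I = (\<integral>y. e y \<partial>lborel)"
  define K where "K = Bd / Z^3 * I"
  define c where "c x = exp (- \<delta> * norm x) / ((1 + norm x) powr p * Z)" for x :: 'a
  have c_nn: "c x \<ge> 0" for x unfolding c_def using Z_pos by simp
  have Bd0: "Bd \<ge> 0"
    by (rule order_trans[OF _ Bd[of 0]]) simp
  have ptw2: "B x y * c x \<le> Bd / Z^3 * e y" for x y
  proof -
    define n where "n = norm (y - x)"
    define a where "a = norm x"
    define b where "b = norm y"
    have n0: "n \<ge> 0" "a \<ge> 0" "b \<ge> 0" by (auto simp: n_def a_def b_def)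
    have nab: "n \<le> a + b" unfolding n_def a_def b_def using norm_triangle_ineq4[of y x] by simp
    have ab: "0 \<le> a * b" using n0 by simp
    have "(1 + a) * (1 + b) = 1 + a + b + a * b" by (simp add: algebra_simps)
    hence "n \<le> (1 + a) * (1 + b)" using nab ab by linarith
    hence "n powr p \<le> ((1 + a) * (1 + b)) powr p" using p n0 by (intro powr_mono2) auto
    also have "\<dots> = (1 + a) powr p * (1 + b) powr p" using n0 by (simp add: powr_mult)
    finally have h1: "n powr p \<le> (1 + a) powr p * (1 + b) powr p" .
    have h2: "exp (\<delta> * n) \<le> exp (\<delta> * a) * exp (\<delta> * b)"
      using nab \<delta> by (simp flip: exp_add add: distrib_left[symmetric])
    have h3: "n powr p * exp (\<delta> * n) \<le> ((1 + a) powr p * exp (\<delta> * a)) * ((1 + b) powr p * exp (\<delta> * b))"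
      using h1 h2 mult_mono[OF h1 h2] by (simp add: mult_ac)
    have pa: "(1 + a) powr p * exp (\<delta> * a) > 0" using n0 by simp
    have "B x y * c x = e y ^ 3 / Z^3 * ((n powr p * exp (\<delta> * n)) / ((1 + a) powr p * exp (\<delta> * a)))"
      unfolding B_def c_def n_def a_def using Z_pos
      by (simp add: exp_minus field_simps power2_eq_square power3_eq_cube)
    also have "\<dots> \<le> e y ^ 3 / Z^3 * ((1 + b) powr p * exp (\<delta> * b))"
      using h3 pa e_pos[of y] Z_pos by (intro mult_left_mono) (auto simp: divide_le_eq mult_ac)
    also have "\<dots> = e y / Z^3 * (e y * e y * (1 + b) powr p * exp (\<delta> * b))"
      by (simp add: power3_eq_cube)
    also have "\<dots> \<le> e y / Z^3 * Bd"
      using Bd[of y] e_pos[of y] Z_pos unfolding b_def e_def by (intro mult_left_mono) auto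
    finally show ?thesis by (simp add: mult.commute)
  qed
  have B_meas[measurable]: "(\<lambda>y. B x y) \<in> borel_measurable lborel" for x unfolding B_def by measurable
  have weight: "(\<integral>\<^sup>+ y. ennreal (B x y) \<partial>lborel) * ennreal (c x) \<le> ennreal K" for x
  proof -
    have "(\<integral>\<^sup>+ y. ennreal (B x y) \<partial>lborel) * ennreal (c x) = (\<integral>\<^sup>+ y. ennreal (B x y * c x) \<partial>lborel)"
      using c_nn B_nn by (subst nn_integral_multc[symmetric]) (auto simp: ennreal_mult)
    also have "\<dots> \<le> (\<integral>\<^sup>+ y. ennreal (Bd / Z^3 * e y) \<partial>lborel)"
      by (intro nn_integral_mono ennreal_leI ptw2)
    also have "\<dots> = ennreal K"
      unfolding K_def I_def using e_int Bd0 Z_pos e_pos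
      by (subst nn_integral_eq_integral) (auto intro!: AE_I2 divide_nonneg_pos mult_nonneg_nonneg simp: less_imp_le)
    finally show ?thesis .
  qed
  have E_meas[measurable]: "E \<in> borel_measurable lborel" unfolding E_def A_def by measurable
  have ptw3: "ennreal ((f x - mu)\<^sup>2 * exp (V x - \<delta> * norm x) / (1 + norm x) powr p * (exp (- 2 * V x) / Z))
      \<le> ennreal K * (E x * ennreal (e x))" for x
  proof -
    have "(f x - mu)\<^sup>2 * exp (V x - \<delta> * norm x) / (1 + norm x) powr p * (exp (- 2 * V x) / Z)
        = (f x - mu)\<^sup>2 * e x * c x"
      unfolding c_def e_def by (simp add: field_simps flip: exp_add)
    hence "ennreal ((f x - mu)\<^sup>2 * exp (V x - \<delta> * norm x) / (1 + norm x) powr p * (exp (- 2 * V x) / Z))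
        = ennreal ((f x - mu)\<^sup>2) * ennreal (e x) * ennreal (c x)"
      using c_nn e_pos by (simp add: ennreal_mult less_imp_le)
    also have "\<dots> \<le> (E x * (\<integral>\<^sup>+ y. ennreal (B x y) \<partial>lborel)) * ennreal (e x) * ennreal (c x)"
      by (intro mult_right_mono pointwise) auto
    also have "\<dots> = (E x * ennreal (e x)) * ((\<integral>\<^sup>+ y. ennreal (B x y) \<partial>lborel) * ennreal (c x))"
      by (simp add: mult_ac)
    also have "\<dots> \<le> (E x * ennreal (e x)) * ennreal K"
      by (intro mult_left_mono weight) auto
    finally show ?thesis by (simp add: mult_ac)
  qed
  have "(\<integral>\<^sup>+ x. ennreal ((f x - mu)\<^sup>2 * exp (V x - \<delta> * norm x) / (1 + norm x) powr p * (exp (- 2 * V x) / Z)) \<partial>lborel)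
      \<le> (\<integral>\<^sup>+ x. ennreal K * (E x * ennreal (e x)) \<partial>lborel)"
    by (intro nn_integral_mono ptw3)
  also have "\<dots> = ennreal K * (\<integral>\<^sup>+ x. E x * ennreal (e x) \<partial>lborel)"
    by (rule nn_integral_cmult) measurable
  finally show ?thesis unfolding mu_eq K_def I_def E_def A_def e_def .
qed

theorem corollary5p2:
  fixes V :: "'a::euclidean_space \<Rightarrow> real"
    and \<delta> \<alpha> \<alpha>0 :: real
  assumes V_meas: "V \<in> borel_measurable lborel"
    and V_locbdd: "locally_bounded V"
    and V_bdd: "bounded (range (\<lambda>x. exp (- V x)))"
    and V_int: "integrable lborel (\<lambda>x. exp (- V x))"
    and \<delta>_pos: "\<delta> > 0"
    and \<alpha>_range: "0 < \<alpha>" "\<alpha> < 2"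
    and \<alpha>0_range: "0 < \<alpha>0" "\<alpha>0 < 1"
    and tail: "Limsup at_infinity (\<lambda>x::'a. ereal ((SUP z\<in>{z. norm z \<ge> norm x}. exp (- V z))
                  * exp (\<delta> * norm x) * norm x powr (real DIM('a) + \<alpha> - \<alpha>0))) = 0"
  shows "\<exists>C0>0. \<forall>f. Cb_inf f \<longrightarrow>
    (\<integral>\<^sup>+ x. ennreal ((f x - mu2V V f)\<^sup>2 * exp (V x - \<delta> * norm x)
              / (1 + norm x) powr (real DIM('a) + \<alpha>) * rho2V V x) \<partial>lborel)
    \<le> ennreal C0 * (\<integral>\<^sup>+ x. (\<integral>\<^sup>+ y. ennreal ((f y - f x)\<^sup>2 / norm (y - x) powr (real DIM('a) + \<alpha>)
              * exp (- \<delta> * norm (y - x)) * exp (- V y)) \<partial>lborel) * ennreal (exp (- V x)) \<partial>lborel)"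
proof -
  obtain M where M: "\<And>x. exp (- V x) \<le> M"
    using V_bdd unfolding bounded_iff by auto
  have Vb: "V \<in> borel_measurable borel" using V_meas by simp
  define p where "p = real DIM('a) + \<alpha>"
  have d1: "real DIM('a) \<ge> 1" using DIM_positive[where 'a='a] by linarith
  have p1: "p > 1" unfolding p_def using \<alpha>_range d1 by linarith
  obtain Bd where Bd: "\<And>y. exp (- V y) * exp (- V y) * (1 + norm y) powr p * exp (\<delta> * norm y) \<le> Bd"
    using tail_bound[OF M \<delta>_pos \<alpha>0_range p1 tail[folded p_def]] by blast
  have Bd0: "Bd \<ge> 0" by (rule order_trans[OF _ Bd[of 0]]) simp
  define Z where "Z = (\<integral>y. exp (- 2 * V y) \<partial>lborel)"
  define I where "I = (\<integral>x. exp (- V x) \<partial>lborel)"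
  have Z0: "Z \<ge> 0" unfolding Z_def by (rule integral_nonneg_AE) auto
  have I0: "I \<ge> 0" unfolding I_def by (rule integral_nonneg_AE) auto
  define K where "K = Bd / Z^3 * I"
  have K0: "K \<ge> 0" unfolding K_def using Bd0 Z0 I0 by simp
  show ?thesis
  proof (intro exI[of _ "K + 1"] conjI allI impI)
    show "K + 1 > 0" using K0 by simp
    fix f :: "'a \<Rightarrow> real"
    assume "Cb_inf f"
    then have fb: "bounded (range f)" and fd: "\<forall>x. f differentiable (at x)"
      by (auto elim: Cb_inf.cases)
    obtain F where F: "\<And>x. \<bar>f x\<bar> \<le> F" using fb unfolding bounded_iff by auto
    have "continuous_on UNIV f"
      using fd by (intro continuous_at_imp_continuous_on) (auto intro: differentiable_imp_continuous_within)
    hence fm: "f \<in> borel_measurable borel" by (rule borel_measurable_continuous_onI)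
    have main: "(\<integral>\<^sup>+ x. ennreal ((f x - mu2V V f)\<^sup>2 * exp (V x - \<delta> * norm x)
              / (1 + norm x) powr p * rho2V V x) \<partial>lborel)
      \<le> ennreal K * (\<integral>\<^sup>+ x. (\<integral>\<^sup>+ y. ennreal ((f y - f x)\<^sup>2 / norm (y - x) powr p
              * exp (- \<delta> * norm (y - x)) * exp (- V y)) \<partial>lborel) * ennreal (exp (- V x)) \<partial>lborel)"
      unfolding mu2V_def rho2V_def K_def Z_def I_def
      by (rule main_bound[OF Vb M V_int \<delta>_pos _ Bd fm F]) (use p1 in simp)
    also have "\<dots> \<le> ennreal (K + 1) * (\<integral>\<^sup>+ x. (\<integral>\<^sup>+ y. ennreal ((f y - f x)\<^sup>2 / norm (y - x) powr p
              * exp (- \<delta> * norm (y - x)) * exp (- V y)) \<partial>lborel) * ennreal (exp (- V x)) \<partial>lborel)"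
      by (intro mult_right_mono ennreal_leI) auto
    finally show "(\<integral>\<^sup>+ x. ennreal ((f x - mu2V V f)\<^sup>2 * exp (V x - \<delta> * norm x)
              / (1 + norm x) powr (real DIM('a) + \<alpha>) * rho2V V x) \<partial>lborel)
    \<le> ennreal (K + 1) * (\<integral>\<^sup>+ x. (\<integral>\<^sup>+ y. ennreal ((f y - f x)\<^sup>2 / norm (y - x) powr (real DIM('a) + \<alpha>)
              * exp (- \<delta> * norm (y - x)) * exp (- V y)) \<partial>lborel) * ennreal (exp (- V x)) \<partial>lborel)"
      unfolding p_def .
  qed
qed

end
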